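(* Let $\langle f,g\rangle$ be a pencil of plane cubics and suppose that $H(g)$ is defined, distinct from $g$, and $H(g)\in\langle f,g\rangle$. Then for any $C\in SL(3)$ such that $H(C\cdot g)\in\langle f,C\cdot g\rangle$, we have $C\cdot\langle f,g\rangle=\langle f,C\cdot g\rangle$.
   Context: Plane cubics up to scalar are points of $\mathbb{P}^9$; $\langle f,g\rangle$ denotes the line (pencil) spanned by $f,g$. $H(g)=\det(\partial^2g/\partial x_i\partial x_j)$ is the Hessian; "defined" means not identically zero, and "distinct from $g$" means not proportional to $g$. $SL(3)$ acts on cubics by linear change of variables $x,y,z$, and hence on pencils. *)

theory Defs
  imports "HOL-Analysis.Analysis"
begin

text \<open>Plane cubics over the complex numbers, represented as the homogeneous cubic
polynomial functions on complex 3-space (over an infinite field a polynomial is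
determined by its function).\<close>

type_synonym form3 = "complex ^ 3 \<Rightarrow> complex"

definition is_cubic :: "form3 \<Rightarrow> bool" where
  "is_cubic F \<longleftrightarrow> (\<exists>c :: nat \<Rightarrow> nat \<Rightarrow> complex.
      F = (\<lambda>v. \<Sum>i\<le>3. \<Sum>j\<le>3 - i. c i j * v$1 ^ i * v$2 ^ j * v$3 ^ (3 - i - j)))"

definition pdiff :: "3 \<Rightarrow> form3 \<Rightarrow> form3" where
  "pdiff i F = (\<lambda>v. deriv (\<lambda>t. F (v + t *s axis i 1)) 0)"

definition hessian :: "form3 \<Rightarrow> form3" where
  "hessian F = (\<lambda>v. det (\<chi> i j. pdiff i (pdiff j F) v))"

definition pencil :: "form3 \<Rightarrow> form3 \<Rightarrow> form3 set" where
  "pencil F G = {(\<lambda>v. a * F v + b * G v) | a b. True}"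

definition lin_indep2 :: "form3 \<Rightarrow> form3 \<Rightarrow> bool" where
  "lin_indep2 F G \<longleftrightarrow> (\<forall>a b. (\<lambda>v. a * F v + b * G v) = (\<lambda>v. 0) \<longrightarrow> a = 0 \<and> b = 0)"

definition proportional :: "form3 \<Rightarrow> form3 \<Rightarrow> bool" where
  "proportional F G \<longleftrightarrow> \<not> lin_indep2 F G"

definition act :: "complex ^ 3 ^ 3 \<Rightarrow> form3 \<Rightarrow> form3" where
  "act C F = (\<lambda>v. F (C *v v))"

end

theory Submission
  imports Defs
begin

inductive polyfun :: "form3 \<Rightarrow> bool" where
  pconst: "polyfun (\<lambda>v. c)"
| pproj: "polyfun (\<lambda>v. v $ m)"
| padd: "polyfun F \<Longrightarrow> polyfun G \<Longrightarrow> polyfun (\<lambda>v. F v + G v)"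
| pmult: "polyfun F \<Longrightarrow> polyfun G \<Longrightarrow> polyfun (\<lambda>v. F v * G v)"

lemma polyfun_sum:
  assumes "finite S" "\<And>x. x \<in> S \<Longrightarrow> polyfun (f x)"
  shows "polyfun (\<lambda>v. \<Sum>x\<in>S. f x v)"
  using assms
proof (induction S rule: finite_induct)
  case empty then show ?case using pconst[of 0] by simp
next
  case (insert x S)
  then show ?case using padd[of "f x" "\<lambda>v. \<Sum>x\<in>S. f x v"] by simp
qed

lemma polyfun_pow: "polyfun F \<Longrightarrow> polyfun (\<lambda>v. F v ^ n)"
proof (induction n)
  case 0 then show ?case using pconst[of 1] by simp
next
  case (Suc n) then show ?case using pmult[of F "\<lambda>v. F v ^ n"] by simp
qed

lemma cubic_polyfun: "is_cubic F \<Longrightarrow> polyfun F"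
  unfolding is_cubic_def
  by (auto intro!: polyfun_sum pmult pconst polyfun_pow pproj)

lemma line_diff:
  "polyfun F \<Longrightarrow> (\<lambda>t. F (v + t *s w)) field_differentiable at t0"
proof (induction rule: polyfun.induct)
  case (pconst c) then show ?case by simp
next
  case (pproj m)
  have "(\<lambda>t. (v + t *s w) $ m) = (\<lambda>t. v $ m + t * w $ m)" by auto
  then show ?case by (auto intro!: derivative_intros)
next
  case (padd F G) then show ?case by (auto intro!: field_differentiable_add)
next
  case (pmult F G) then show ?case by (auto intro!: field_differentiable_mult)
qed

lemma pdiff_add: "polyfun F \<Longrightarrow> polyfun G \<Longrightarrow>
  pdiff i (\<lambda>v. F v + G v) = (\<lambda>v. pdiff i F v + pdiff i G v)"
  unfolding pdiff_def by (auto intro!: ext deriv_add line_diff)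

lemma pdiff_mult: "polyfun F \<Longrightarrow> polyfun G \<Longrightarrow>
  pdiff i (\<lambda>v. F v * G v) = (\<lambda>v. pdiff i F v * G v + F v * pdiff i G v)"
  unfolding pdiff_def by (auto simp: line_diff intro!: ext)

lemma pdiff_const: "pdiff i (\<lambda>v. c) = (\<lambda>v. 0)"
  unfolding pdiff_def by simp

lemma pdiff_proj: "pdiff i (\<lambda>v. v $ m) = (\<lambda>v. if m = i then 1 else 0)"
proof (rule ext)
  fix v :: "complex^3"
  define c :: complex where "c = (if m = i then 1 else 0)"
  have e: "(\<lambda>t. (v + t *s axis i 1) $ m) = (\<lambda>t. v $ m + t * c)"
    by (auto simp: axis_def c_def)
  have "((\<lambda>t. v $ m + t * c) has_field_derivative c) (at 0)"
    by (auto intro!: derivative_eq_intros)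
  then have "deriv (\<lambda>t. v $ m + t * c) 0 = c" by (rule DERIV_imp_deriv)
  then show "pdiff i (\<lambda>v. v $ m) v = (if m = i then 1 else 0)"
    unfolding pdiff_def e c_def by simp
qed

lemma pdiff_sum: "finite S \<Longrightarrow> (\<And>x. x \<in> S \<Longrightarrow> polyfun (f x)) \<Longrightarrow>
  pdiff i (\<lambda>v. \<Sum>x\<in>S. f x v) = (\<lambda>v. \<Sum>x\<in>S. pdiff i (f x) v)"
proof (induction S rule: finite_induct)
  case empty then show ?case by (simp add: pdiff_const)
next
  case (insert x S)
  then show ?case
    using pdiff_add[of "f x" "\<lambda>v. \<Sum>x\<in>S. f x v" i] polyfun_sum[of S f] by simp
qed

lemma pdiff_cmult: "polyfun F \<Longrightarrow> pdiff i (\<lambda>v. c * F v) = (\<lambda>v. c * pdiff i F v)"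
  using pdiff_mult[of "\<lambda>v. c" F i] pconst[of c] by (simp add: pdiff_const)

lemma polyfun_pdiff: "polyfun F \<Longrightarrow> polyfun (pdiff i F)"
proof (induction rule: polyfun.induct)
  case (pconst c) then show ?case by (simp add: pdiff_const polyfun.pconst)
next
  case (pproj m) then show ?case by (simp add: pdiff_proj polyfun.pconst)
next
  case (padd F G) then show ?case by (simp add: pdiff_add polyfun.padd)
next
  case (pmult F G) then show ?case by (simp add: pdiff_mult polyfun.padd polyfun.pmult)
qed

lemma polyfun_act: "polyfun F \<Longrightarrow> polyfun (act C F)"
proof (induction rule: polyfun.induct)
  case (pconst c) then show ?case by (simp add: act_def polyfun.pconst)
next
  case (pproj m)
  have "act C (\<lambda>v. v $ m) = (\<lambda>v. \<Sum>l\<in>UNIV. C $ m $ l * v $ l)"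
    by (simp add: act_def matrix_vector_mult_def)
  then show ?case by (auto intro!: polyfun_sum polyfun.pmult polyfun.pconst polyfun.pproj)
next
  case (padd F G) then show ?case by (simp add: act_def polyfun.padd)
next
  case (pmult F G) then show ?case by (simp add: act_def polyfun.pmult)
qed

lemma pdiff_act: "polyfun F \<Longrightarrow>
  pdiff i (act C F) = (\<lambda>v. \<Sum>k\<in>UNIV. C $ k $ i * pdiff k F (C *v v))"
proof (induction rule: polyfun.induct)
  case (pconst c) then show ?case by (simp add: act_def pdiff_const)
next
  case (pproj m)
  have "act C (\<lambda>v. v $ m) = (\<lambda>v. \<Sum>l\<in>UNIV. C $ m $ l * v $ l)"
    by (simp add: act_def matrix_vector_mult_def)
  moreover have "pdiff i (\<lambda>v. \<Sum>l\<in>UNIV. C $ m $ l * v $ l) = (\<lambda>v. \<Sum>l\<in>UNIV. C $ m $ l * (if l = i then 1 else 0))"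
    by (subst pdiff_sum) (auto simp: pdiff_cmult polyfun.pproj pdiff_proj
        intro!: polyfun.pmult polyfun.pconst polyfun.pproj)
  ultimately have "pdiff i (act C (\<lambda>v. v $ m)) = (\<lambda>v. \<Sum>l\<in>UNIV. C $ m $ l * (if l = i then 1 else 0))"
    by simp
  then show ?case by (simp add: pdiff_proj if_distrib cong: if_cong)
next
  case (padd F G)
  have "act C (\<lambda>v. F v + G v) = (\<lambda>v. act C F v + act C G v)" by (simp add: act_def)
  then show ?case using padd
    by (simp add: pdiff_add polyfun_act sum.distrib distrib_left)
next
  case (pmult F G)
  have "act C (\<lambda>v. F v * G v) = (\<lambda>v. act C F v * act C G v)" by (simp add: act_def)
  then have "pdiff i (act C (\<lambda>v. F v * G v)) =
     (\<lambda>v. pdiff i (act C F) v * act C G v + act C F v * pdiff i (act C G) v)"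
    using pmult by (simp add: pdiff_mult polyfun_act)
  also have "\<dots> = (\<lambda>v. \<Sum>k\<in>UNIV. C $ k $ i * (pdiff k F (C *v v) * G (C *v v) + F (C *v v) * pdiff k G (C *v v)))"
    unfolding pmult.IH
    by (simp add: act_def sum_distrib_right sum_distrib_left sum.distrib algebra_simps)
  also have "\<dots> = (\<lambda>v. \<Sum>k\<in>UNIV. C $ k $ i * pdiff k (\<lambda>v. F v * G v) (C *v v))"
    using pmult by (simp add: pdiff_mult)
  finally show ?case .
qed

lemma pdiff2_act:
  assumes F: "polyfun F"
  shows "pdiff i (pdiff j (act C F)) =
    (\<lambda>v. \<Sum>l\<in>UNIV. C $ l $ i * (\<Sum>k\<in>UNIV. C $ k $ j * pdiff l (pdiff k F) (C *v v)))"
proof -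
  define G where "G = (\<lambda>u. \<Sum>k\<in>UNIV. C $ k $ j * pdiff k F u)"
  have PG: "polyfun G" unfolding G_def
    by (auto intro!: polyfun_sum polyfun.pmult polyfun.pconst polyfun_pdiff F)
  have "pdiff j (act C F) = act C G"
    using pdiff_act[OF F] by (simp add: act_def G_def)
  then have "pdiff i (pdiff j (act C F)) = (\<lambda>v. \<Sum>l\<in>UNIV. C $ l $ i * pdiff l G (C *v v))"
    using pdiff_act[OF PG] by simp
  moreover have "pdiff l G = (\<lambda>u. \<Sum>k\<in>UNIV. C $ k $ j * pdiff l (pdiff k F) u)" for l
    unfolding G_def
    by (subst pdiff_sum) (auto simp: pdiff_cmult polyfun_pdiff F
        intro!: polyfun.pmult polyfun.pconst polyfun_pdiff)
  ultimately show ?thesis by simp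
qed

lemma hessian_act:
  assumes F: "polyfun F" and d: "det C = 1"
  shows "hessian (act C F) = act C (hessian F)"
proof (rule ext)
  fix v
  define M :: "complex^3^3" where "M = (\<chi> l k. pdiff l (pdiff k F) (C *v v))"
  have "(\<chi> i j. pdiff i (pdiff j (act C F)) v) = transpose C ** M ** C"
  proof -
    have "(\<Sum>l\<in>UNIV. C $ l $ i * (\<Sum>k\<in>UNIV. C $ k $ j * pdiff l (pdiff k F) (C *v v)))
        = (\<Sum>k\<in>UNIV. (\<Sum>l\<in>UNIV. C $ l $ i * M $ l $ k) * C $ k $ j)" for i j
    proof -
      have "(\<Sum>l\<in>UNIV. C $ l $ i * (\<Sum>k\<in>UNIV. C $ k $ j * pdiff l (pdiff k F) (C *v v)))
          = (\<Sum>l\<in>UNIV. \<Sum>k\<in>UNIV. C $ l $ i * M $ l $ k * C $ k $ j)"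
        unfolding sum_distrib_left M_def by (simp add: mult_ac)
      also have "\<dots> = (\<Sum>k\<in>UNIV. \<Sum>l\<in>UNIV. C $ l $ i * M $ l $ k * C $ k $ j)"
        by (rule sum.swap)
      also have "\<dots> = (\<Sum>k\<in>UNIV. (\<Sum>l\<in>UNIV. C $ l $ i * M $ l $ k) * C $ k $ j)"
        by (simp add: sum_distrib_right)
      finally show ?thesis .
    qed
    then show ?thesis
      unfolding pdiff2_act[OF F]
      by (simp add: vec_eq_iff matrix_matrix_mult_def transpose_def)
  qed
  then have "hessian (act C F) v = det (transpose C ** M ** C)"
    by (simp add: hessian_def)
  also have "\<dots> = det M" by (simp add: det_mul d)
  also have "\<dots> = act C (hessian F) v" by (simp add: act_def hessian_def M_def)
  finally show "hessian (act C F) v = act C (hessian F) v" .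
qed

lemma act_pencil: "act C ` pencil F G = pencil (act C F) (act C G)"
  unfolding pencil_def act_def
  by (auto, rule_tac x="\<lambda>v. a * F v + b * G v" in image_eqI, auto)

lemma surj_det1:
  assumes "det C = (1::complex)" shows "\<exists>B. \<forall>u. C *v (B *v u) = (u::complex^3)"
proof -
  have "invertible C" using assms by (simp add: invertible_det_nz)
  then obtain B where "C ** B = mat 1" unfolding invertible_def by blast
  then show ?thesis by (metis matrix_vector_mul_assoc matrix_vector_mul_lid)
qed

lemma indep_act:
  assumes "lin_indep2 F G" "det C = 1"
  shows "lin_indep2 (act C F) (act C G)"
  unfolding lin_indep2_def
proof (intro allI impI)
  fix a b
  assume h: "(\<lambda>v. a * act C F v + b * act C G v) = (\<lambda>v. 0)"
  obtain B where B: "\<forall>u. C *v (B *v u) = u" using surj_det1[OF assms(2)] by blast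
  have "(\<lambda>u. a * F u + b * G u) = (\<lambda>v. 0)"
  proof (rule ext)
    fix u
    have "a * act C F (B *v u) + b * act C G (B *v u) = 0" using h by metis
    then show "a * F u + b * G u = 0" using B by (simp add: act_def)
  qed
  then show "a = 0 \<and> b = 0" using assms(1) unfolding lin_indep2_def by blast
qed

theorem mainTheorem13:
  fixes f g :: form3 and C :: "complex ^ 3 ^ 3"
  assumes "is_cubic f" and "is_cubic g" and "lin_indep2 f g"
    and "hessian g \<noteq> (\<lambda>v. 0)"
    and "\<not> proportional (hessian g) g"
    and "hessian g \<in> pencil f g"
    and "det C = 1"
    and "hessian (act C g) \<in> pencil f (act C g)"
  shows "act C ` pencil f g = pencil f (act C g)"
proof -
  have ind1: "lin_indep2 (hessian g) g" using assms(5) unfolding proportional_def by simp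
  have ind2: "lin_indep2 (act C (hessian g)) (act C g)" using indep_act[OF ind1 assms(7)] .
  have HC: "hessian (act C g) = act C (hessian g)"
    using hessian_act[OF cubic_polyfun[OF assms(2)] assms(7)] .
  obtain a b where ab: "hessian g = (\<lambda>v. a * f v + b * g v)"
    using assms(6) unfolding pencil_def by blast
  obtain a' b' where ab': "hessian (act C g) = (\<lambda>v. a' * f v + b' * act C g v)"
    using assms(8) unfolding pencil_def by blast
  have a0: "a \<noteq> 0"
  proof
    assume "a = 0"
    then have "(\<lambda>v. 1 * hessian g v + (- b) * g v) = (\<lambda>v. 0)" using ab by auto
    then show False using ind1 unfolding lin_indep2_def by (metis one_neq_zero)
  qed
  have a'0: "a' \<noteq> 0"
  proof
    assume "a' = 0"
    then have "(\<lambda>v. 1 * act C (hessian g) v + (- b') * act C g v) = (\<lambda>v. 0)"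
      using ab' HC by auto
    then show False using ind2 unfolding lin_indep2_def by (metis one_neq_zero)
  qed
  have eq: "a * act C f v + b * act C g v = a' * f v + b' * act C g v" for v
  proof -
    have "act C (hessian g) v = hessian (act C g) v" using HC by simp
    then show ?thesis using ab ab' by (simp add: act_def)
  qed
  have "pencil (act C f) (act C g) = pencil f (act C g)"
  proof
    show "pencil (act C f) (act C g) \<subseteq> pencil f (act C g)"
    proof
      fix h assume "h \<in> pencil (act C f) (act C g)"
      then obtain x y where h: "h = (\<lambda>v. x * act C f v + y * act C g v)"
        unfolding pencil_def by blast
      have "h = (\<lambda>v. (x * a' / a) * f v + (x * (b' - b) / a + y) * act C g v)"
      proof (rule ext)
        fix v
        have "a * (x * act C f v + y * act C g v) - a * ((x * a' / a) * f v + (x * (b' - b) / a + y) * act C g v)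
            = x * ((a * act C f v + b * act C g v) - (a' * f v + b' * act C g v))"
          using a0 by (simp add: field_simps)
        also have "\<dots> = 0" using eq[of v] by simp
        finally show "h v = (x * a' / a) * f v + (x * (b' - b) / a + y) * act C g v"
          unfolding h using a0 by (simp add: right_diff_distrib[symmetric])
      qed
      then show "h \<in> pencil f (act C g)" unfolding pencil_def by blast
    qed
  next
    show "pencil f (act C g) \<subseteq> pencil (act C f) (act C g)"
    proof
      fix h assume "h \<in> pencil f (act C g)"
      then obtain x y where h: "h = (\<lambda>v. x * f v + y * act C g v)"
        unfolding pencil_def by blast
      have "h = (\<lambda>v. (x * a / a') * act C f v + (x * (b - b') / a' + y) * act C g v)"
      proof (rule ext)
        fix v
        have "a' * (x * f v + y * act C g v) - a' * ((x * a / a') * act C f v + (x * (b - b') / a' + y) * act C g v)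
            = x * ((a' * f v + b' * act C g v) - (a * act C f v + b * act C g v))"
          using a'0 by (simp add: field_simps)
        also have "\<dots> = 0" using eq[of v] by simp
        finally show "h v = (x * a / a') * act C f v + (x * (b - b') / a' + y) * act C g v"
          unfolding h using a'0 by (simp add: right_diff_distrib[symmetric])
      qed
      then show "h \<in> pencil (act C f) (act C g)" unfolding pencil_def by blast
    qed
  qed
  then show ?thesis using act_pencil by simp
qed

end
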